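(* Let $a<b$, $c<d$ and $C\in\mathbb{R}\setminus\{0\}$. Let $(p_n)_{n\ge0}$, $(q_n)_{n\ge0}$ be real sequences with $p_0=q_0$ such that $\sigma(s)=\sum_{n\ge0}p_n(s-a)^n$ and $\tau(t)=\sum_{n\ge0}q_n(t-c)^n$ converge uniformly on $[a,b]$ and $[c,d]$ respectively. Let $k$ be the solution of the Goursat problem $\partial^2k/\partial s\partial t=Ck$ on $[a,b]\times[c,d]$ with $k(s,c)=\sigma(s)$, $k(a,t)=\tau(t)$. Then for all $(s,t)\in[a,b]\times[c,d]$, $$k(s,t)=\sum_{n=1}^\infty\sum_{m=0}^\infty p_n\frac{[C(t-c)]^m(s-a)^{n+m}}{m!}\frac{n!}{(n+m)!}+\sum_{n=0}^\infty\sum_{m=0}^\infty q_n\frac{[C(s-a)]^m(t-c)^{n+m}}{m!}\frac{n!}{(n+m)!},$$ or equivalently $$k(s,t)=\sum_{n=0}^\infty\sum_{m=0}^\infty p_n\frac{[C(t-c)]^m(s-a)^{n+m}}{m!}\frac{n!}{(n+m)!}+\sum_{n=1}^\infty\sum_{m=0}^\infty q_n\frac{[C(s-a)]^m(t-c)^{n+m}}{m!}\frac{n!}{(n+m)!}.$$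
   Context: The solution of the Goursat problem is the continuous function $k$ on $[a,b]\times[c,d]$ with $k(s,t)=\sigma(s)+\tau(t)-\sigma(a)+C\int_a^s\int_c^t k(r,w)\,dw\,dr$ (equivalently, the classical solution given by the Riemann-function representation with the zero-order modified Bessel function $I_0$). *)

theory Defs
  imports "HOL-Analysis.Analysis"
begin

definition goursat_solution ::
  "real \<Rightarrow> real \<Rightarrow> real \<Rightarrow> real \<Rightarrow> real \<Rightarrow> (real \<Rightarrow> real) \<Rightarrow> (real \<Rightarrow> real)
    \<Rightarrow> (real \<Rightarrow> real \<Rightarrow> real) \<Rightarrow> bool" where
  "goursat_solution a b c d C \<sigma> \<tau> k \<longleftrightarrow>
     continuous_on ({a..b} \<times> {c..d}) (\<lambda>(s, t). k s t) \<and>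
     (\<forall>s\<in>{a..b}. \<forall>t\<in>{c..d}.
        k s t = \<sigma> s + \<tau> t - \<sigma> a
                + C * integral {a..s} (\<lambda>r. integral {c..t} (\<lambda>w. k r w)))"

end

theory Submission
  imports Defs
begin

definition Iop :: "real \<Rightarrow> real \<Rightarrow> (real \<Rightarrow> real \<Rightarrow> real) \<Rightarrow> real \<Rightarrow> real \<Rightarrow> real" where
  "Iop a c f s t = integral {a..s} (\<lambda>r. integral {c..t} (\<lambda>w. f r w))"

lemma power_integral:
  fixes c t :: real assumes "c \<le> t"
  shows "integral {c..t} (\<lambda>w. (w - c) ^ j) = (t - c) ^ Suc j / real (Suc j)"
proof -
  have "((\<lambda>w. (w - c) ^ j) has_integral ((\<lambda>w. (w - c) ^ Suc j / real (Suc j)) t - (\<lambda>w. (w - c) ^ Suc j / real (Suc j)) c)) {c..t}"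
    apply (rule fundamental_theorem_of_calculus[OF assms])
    apply (auto intro!: derivative_eq_intros simp: has_real_derivative_iff_has_vector_derivative[symmetric])
    apply (cases j)
     apply (auto simp: field_simps power_minus_mult)
    done
  then show ?thesis by (simp add: integral_unique)
qed

lemma Iop_monomial:
  fixes a c s t :: real assumes "a \<le> s" "c \<le> t"
  shows "Iop a c (\<lambda>r w. K * (r - a) ^ i * (w - c) ^ j) s t
     = K * (s - a) ^ Suc i * (t - c) ^ Suc j / (real (Suc i) * real (Suc j))"
  unfolding Iop_def using assms
  by (simp add: power_integral)

lemma cont_sub:
  fixes a b c d s t :: real and f :: "real \<Rightarrow> real \<Rightarrow> real"
  assumes "continuous_on ({a..b} \<times> {c..d}) (\<lambda>(s, t). f s t)"
    and "a \<le> s" "s \<le> b" "c \<le> t" "t \<le> d"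
  shows "continuous_on ({a..s} \<times> {c..t}) (\<lambda>(s, t). f s t)"
  using assms(1) by (rule continuous_on_subset) (use assms in auto)

lemma Iop_inner_int:
  fixes a b c d r t :: real and f :: "real \<Rightarrow> real \<Rightarrow> real"
  assumes "continuous_on ({a..b} \<times> {c..d}) (\<lambda>(s, t). f s t)"
    and "a \<le> r" "r \<le> b" "c \<le> t" "t \<le> d"
  shows "f r integrable_on {c..t}"
proof -
  have "continuous_on {c..t} (\<lambda>w. f r w)"
    by (rule continuous_on_compose2[OF assms(1), where f="\<lambda>w. (r, w)", simplified])
      (use assms in \<open>auto intro!: continuous_intros\<close>)
  then show ?thesis by (simp add: integrable_continuous_interval)
qed

lemma Iop_outer_cont:
  fixes a b c d s t :: real and f :: "real \<Rightarrow> real \<Rightarrow> real"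
  assumes "continuous_on ({a..b} \<times> {c..d}) (\<lambda>(s, t). f s t)"
    and "a \<le> s" "s \<le> b" "c \<le> t" "t \<le> d"
  shows "continuous_on {a..s} (\<lambda>r. integral {c..t} (f r))"
proof -
  have "continuous_on ({a..s} \<times> cbox c t) (\<lambda>(x, y). f x y)"
    using cont_sub[OF assms] by (simp add: cbox_interval)
  from integral_continuous_on_param[OF this] show ?thesis by (simp add: cbox_interval)
qed

lemma Iop_outer_int:
  fixes a b c d s t :: real and f :: "real \<Rightarrow> real \<Rightarrow> real"
  assumes "continuous_on ({a..b} \<times> {c..d}) (\<lambda>(s, t). f s t)"
    and "a \<le> s" "s \<le> b" "c \<le> t" "t \<le> d"
  shows "(\<lambda>r. integral {c..t} (f r)) integrable_on {a..s}"
  using Iop_outer_cont[OF assms] by (simp add: integrable_continuous_interval)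

lemma Iop_diff:
  assumes "continuous_on ({a..b} \<times> {c..d}) (\<lambda>(s, t). f s t)"
    and "continuous_on ({a..b} \<times> {c..d}) (\<lambda>(s, t). g s t)"
    and "a \<le> s" "s \<le> b" "c \<le> t" "t \<le> d"
  shows "Iop a c (\<lambda>r w. f r w - g r w) s t = Iop a c f s t - Iop a c g s t"
proof -
  have "integral {c..t} (\<lambda>w. f r w - g r w) = integral {c..t} (f r) - integral {c..t} (g r)"
    if "r \<in> {a..s}" for r
    using that assms by (intro integral_diff Iop_inner_int[where b=b and d=d]) auto
  then have "Iop a c (\<lambda>r w. f r w - g r w) s t
     = integral {a..s} (\<lambda>r. integral {c..t} (f r) - integral {c..t} (g r))"
    unfolding Iop_def by (intro integral_cong) auto
  also have "\<dots> = Iop a c f s t - Iop a c g s t"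
    unfolding Iop_def using assms
    by (intro integral_diff Iop_outer_int[where b=b and d=d]) auto
  finally show ?thesis .
qed

lemma Iop_add:
  assumes "continuous_on ({a..b} \<times> {c..d}) (\<lambda>(s, t). f s t)"
    and "continuous_on ({a..b} \<times> {c..d}) (\<lambda>(s, t). g s t)"
    and "a \<le> s" "s \<le> b" "c \<le> t" "t \<le> d"
  shows "Iop a c (\<lambda>r w. f r w + g r w) s t = Iop a c f s t + Iop a c g s t"
proof -
  have "integral {c..t} (\<lambda>w. f r w + g r w) = integral {c..t} (f r) + integral {c..t} (g r)"
    if "r \<in> {a..s}" for r
    using that assms by (intro integral_add Iop_inner_int[where b=b and d=d]) auto
  then have "Iop a c (\<lambda>r w. f r w + g r w) s t
     = integral {a..s} (\<lambda>r. integral {c..t} (f r) + integral {c..t} (g r))"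
    unfolding Iop_def by (intro integral_cong) auto
  also have "\<dots> = Iop a c f s t + Iop a c g s t"
    unfolding Iop_def using assms
    by (intro integral_add Iop_outer_int[where b=b and d=d]) auto
  finally show ?thesis .
qed

lemma Iop_cmult: "Iop a c (\<lambda>r w. K * f r w) s t = K * Iop a c f s t"
  unfolding Iop_def by simp

lemma Iop_sum:
  assumes "finite S" "\<And>i. i \<in> S \<Longrightarrow> continuous_on ({a..b} \<times> {c..d}) (\<lambda>(s, t). f i s t)"
    and "a \<le> s" "s \<le> b" "c \<le> t" "t \<le> d"
  shows "Iop a c (\<lambda>r w. \<Sum>i\<in>S. f i r w) s t = (\<Sum>i\<in>S. Iop a c (f i) s t)"
  using assms(1,2)
proof (induction S rule: finite_induct)
  case empty then show ?case by (simp add: Iop_def)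
next
  case (insert x F)
  have c: "continuous_on ({a..b} \<times> {c..d}) (\<lambda>(s, t). \<Sum>i\<in>F. f i s t)"
  proof -
    have "continuous_on ({a..b} \<times> {c..d}) (\<lambda>p. \<Sum>i\<in>F. (\<lambda>(s, t). f i s t) p)"
      using insert by (intro continuous_on_sum) auto
    then show ?thesis by (simp add: case_prod_beta)
  qed
  have "Iop a c (\<lambda>r w. \<Sum>i\<in>insert x F. f i r w) s t = Iop a c (\<lambda>r w. f x r w + (\<Sum>i\<in>F. f i r w)) s t"
    using insert by simp
  also have "\<dots> = Iop a c (f x) s t + Iop a c (\<lambda>r w. \<Sum>i\<in>F. f i r w) s t"
    using Iop_add[OF _ c, of "f x"] insert assms by simp
  finally show ?case using insert by simp
qed

lemma Iop_mono:
  assumes "continuous_on ({a..b} \<times> {c..d}) (\<lambda>(s, t). f s t)"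
    and "continuous_on ({a..b} \<times> {c..d}) (\<lambda>(s, t). g s t)"
    and "\<And>r w. r \<in> {a..b} \<Longrightarrow> w \<in> {c..d} \<Longrightarrow> \<bar>f r w\<bar> \<le> g r w"
    and "a \<le> s" "s \<le> b" "c \<le> t" "t \<le> d"
  shows "\<bar>Iop a c f s t\<bar> \<le> Iop a c g s t"
proof -
  have "norm (Iop a c f s t) \<le> integral {a..s} (\<lambda>r. integral {c..t} (g r))"
    unfolding Iop_def
  proof (rule integral_norm_bound_integral)
    show "(\<lambda>r. integral {c..t} (\<lambda>w. f r w)) integrable_on {a..s}"
      using Iop_outer_int[OF assms(1)] assms by auto
    show "(\<lambda>r. integral {c..t} (g r)) integrable_on {a..s}"
      using Iop_outer_int[OF assms(2)] assms by auto
    fix r assume r: "r \<in> {a..s}"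
    show "norm (integral {c..t} (\<lambda>w. f r w)) \<le> integral {c..t} (g r)"
      apply (rule integral_norm_bound_integral)
      using r assms Iop_inner_int[OF assms(1), of r t] Iop_inner_int[OF assms(2), of r t] by auto
  qed
  then show ?thesis by (simp add: Iop_def)
qed

definition mu :: "real \<Rightarrow> real \<Rightarrow> real \<Rightarrow> nat \<Rightarrow> real \<Rightarrow> real \<Rightarrow> real" where
  "mu a c C j r w = \<bar>C\<bar> ^ j / (fact j)^2 * (r - a) ^ j * (w - c) ^ j"

lemma mu_cont: "continuous_on S (\<lambda>(r, w). mu a c C j r w)"
  unfolding mu_def case_prod_beta by (intro continuous_intros)

lemma mu_Iop:
  fixes a c s t :: real assumes "a \<le> s" "c \<le> t"
  shows "\<bar>C\<bar> * Iop a c (mu a c C j) s t = mu a c C (Suc j) s t"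
proof -
  have "Iop a c (mu a c C j) s t = \<bar>C\<bar> ^ j / (fact j)^2 * (s - a) ^ Suc j * (t - c) ^ Suc j / (real (Suc j) * real (Suc j))"
    unfolding mu_def[abs_def] by (rule Iop_monomial[OF assms])
  then show ?thesis unfolding mu_def
    by (simp add: field_simps power2_eq_square)
qed

lemma mu_nonneg: "a \<le> r \<Longrightarrow> c \<le> w \<Longrightarrow> 0 \<le> mu a c C j r w"
  unfolding mu_def by simp

lemma mu_eq: "mu a c C j r w = (\<bar>C\<bar> * (r - a) * (w - c)) ^ j / (fact j)^2"
  unfolding mu_def by (simp add: power_mult_distrib)

lemma stab:
  fixes a b c d C \<epsilon> :: real and w :: "real \<Rightarrow> real \<Rightarrow> real"
  assumes ab: "a \<le> b" and cd: "c \<le> d"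
    and cont: "continuous_on ({a..b} \<times> {c..d}) (\<lambda>(s, t). w s t)"
    and eq: "\<And>s t. s \<in> {a..b} \<Longrightarrow> t \<in> {c..d} \<Longrightarrow> \<bar>w s t - C * Iop a c w s t\<bar> \<le> \<epsilon>"
    and st: "s \<in> {a..b}" "t \<in> {c..d}"
  shows "\<bar>w s t\<bar> \<le> \<epsilon> * exp (\<bar>C\<bar> * (b - a) * (d - c))"
proof -
  have "compact ((\<lambda>(s, t). w s t) ` ({a..b} \<times> {c..d}))"
    by (intro compact_continuous_image cont compact_Times compact_Icc)
  then obtain B where B: "\<And>x. x \<in> (\<lambda>(s, t). w s t) ` ({a..b} \<times> {c..d}) \<Longrightarrow> norm x \<le> B"
    using compact_imp_bounded bounded_iff by metis
  have Bw: "\<bar>w r v\<bar> \<le> B" if "r \<in> {a..b}" "v \<in> {c..d}" for r v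
    using B[of "w r v"] that by force
  have eps0: "0 \<le> \<epsilon>" using eq[of a c] ab cd by (smt (verit) atLeastAtMost_iff)
  define \<phi> where "\<phi> m r v = \<epsilon> * (\<Sum>j<m. mu a c C j r v) + B * mu a c C m r v" for m r v
  have phic: "continuous_on ({a..b} \<times> {c..d}) (\<lambda>(r, v). \<phi> m r v)" for m
    unfolding \<phi>_def case_prod_beta mu_def by (intro continuous_intros)
  have main: "\<forall>r\<in>{a..b}. \<forall>v\<in>{c..d}. \<bar>w r v\<bar> \<le> \<phi> m r v" for m
  proof (induction m)
    case 0
    then show ?case using Bw by (simp add: \<phi>_def mu_def)
  next
    case (Suc m)
    show ?case
    proof (intro ballI)
      fix r v assume r: "r \<in> {a..b}" and v: "v \<in> {c..d}"
      have I1: "\<bar>Iop a c w r v\<bar> \<le> Iop a c (\<phi> m) r v"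
        by (rule Iop_mono[OF cont phic]) (use Suc r v in auto)
      have I2: "Iop a c (\<phi> m) r v = \<epsilon> * (\<Sum>j<m. Iop a c (mu a c C j) r v) + B * Iop a c (mu a c C m) r v"
      proof -
        have "Iop a c (\<phi> m) r v = Iop a c (\<lambda>r v. \<epsilon> * (\<Sum>j<m. mu a c C j r v)) r v + Iop a c (\<lambda>r v. B * mu a c C m r v) r v"
          unfolding \<phi>_def
          by (rule Iop_add[where b=b and d=d]) (use r v in \<open>auto simp: case_prod_beta mu_def intro!: continuous_intros\<close>)
        also have "\<dots> = \<epsilon> * Iop a c (\<lambda>r v. \<Sum>j<m. mu a c C j r v) r v + B * Iop a c (mu a c C m) r v"
          by (simp add: Iop_cmult)
        also have "Iop a c (\<lambda>r v. \<Sum>j<m. mu a c C j r v) r v = (\<Sum>j<m. Iop a c (mu a c C j) r v)"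
          by (rule Iop_sum[where b=b and d=d]) (use r v mu_cont in auto)
        finally show ?thesis .
      qed
      have "\<bar>w r v\<bar> \<le> \<epsilon> + \<bar>C\<bar> * \<bar>Iop a c w r v\<bar>"
        using eq[OF r v] abs_mult[of C "Iop a c w r v"] by linarith
      also have "\<dots> \<le> \<epsilon> + \<bar>C\<bar> * Iop a c (\<phi> m) r v"
        using I1 by (simp add: mult_left_mono)
      also have "\<bar>C\<bar> * Iop a c (\<phi> m) r v = \<epsilon> * (\<Sum>j<m. mu a c C (Suc j) r v) + B * mu a c C (Suc m) r v"
        using I2 r v by (simp add: algebra_simps sum_distrib_left mu_Iop flip: mu_Iop)
      also have "\<epsilon> + \<dots> = \<phi> (Suc m) r v"
        unfolding \<phi>_def sum.lessThan_Suc_shift by (simp add: mu_def[of a c C 0] algebra_simps)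
      finally show "\<bar>w r v\<bar> \<le> \<phi> (Suc m) r v" .
    qed
  qed
  define L where "L = \<bar>C\<bar> * (s - a) * (t - c)"
  have L0: "0 \<le> L" using st by (simp add: L_def)
  have LE: "L \<le> \<bar>C\<bar> * (b - a) * (d - c)"
    unfolding L_def using st by (intro mult_mono) auto
  have sumle: "(\<Sum>j<m. mu a c C j s t) \<le> exp (\<bar>C\<bar> * (b - a) * (d - c))" for m
  proof -
    have "(\<Sum>j<m. mu a c C j s t) \<le> (\<Sum>j<m. L ^ j / fact j)"
    proof (rule sum_mono)
      fix j
      have "L ^ j / (fact j)^2 \<le> L ^ j / fact j"
        using L0 by (intro divide_left_mono) (auto simp: power2_eq_square)
      then show "mu a c C j s t \<le> L ^ j / fact j" by (simp add: mu_eq L_def)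
    qed
    also have "\<dots> \<le> (\<Sum>j. L ^ j / fact j)"
      using summable_exp_generic[of L] L0
      by (intro sum_le_suminf) (auto simp: divide_inverse mult.commute)
    also have "\<dots> = exp L" by (simp add: exp_def divide_inverse mult.commute)
    also have "\<dots> \<le> exp (\<bar>C\<bar> * (b - a) * (d - c))" using LE by simp
    finally show ?thesis .
  qed
  have lim: "(\<lambda>m. mu a c C m s t) \<longlonglongrightarrow> 0"
  proof (rule tendsto_sandwich[of "\<lambda>_. 0" _ _ "\<lambda>m. L ^ m / fact m"])
    show "\<forall>\<^sub>F m in sequentially. 0 \<le> mu a c C m s t"
      by (intro always_eventually allI mu_nonneg) (use st in auto)
    show "\<forall>\<^sub>F m in sequentially. mu a c C m s t \<le> L ^ m / fact m"
    proof (intro always_eventually allI)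
      fix j
      have "L ^ j / (fact j)^2 \<le> L ^ j / fact j"
        using L0 by (intro divide_left_mono) (auto simp: power2_eq_square)
      then show "mu a c C j s t \<le> L ^ j / fact j" by (simp add: mu_eq L_def)
    qed
    have "summable (\<lambda>m. L ^ m / fact m)"
      using summable_exp_generic[of L] by (simp add: divide_inverse mult.commute)
    then show "(\<lambda>m. L ^ m / fact m) \<longlonglongrightarrow> 0" by (rule summable_LIMSEQ_zero)
  qed simp
  have "\<bar>w s t\<bar> \<le> \<epsilon> * exp (\<bar>C\<bar> * (b - a) * (d - c)) + B * mu a c C m s t" for m
  proof -
    have "\<epsilon> * (\<Sum>j<m. mu a c C j s t) \<le> \<epsilon> * exp (\<bar>C\<bar> * (b - a) * (d - c))"
      by (rule mult_left_mono[OF sumle eps0])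
    moreover have "\<bar>w s t\<bar> \<le> \<phi> m s t" using main[of m] st by blast
    ultimately show ?thesis unfolding \<phi>_def by linarith
  qed
  moreover have "(\<lambda>m. \<epsilon> * exp (\<bar>C\<bar> * (b - a) * (d - c)) + B * mu a c C m s t)
      \<longlonglongrightarrow> \<epsilon> * exp (\<bar>C\<bar> * (b - a) * (d - c)) + B * 0"
    by (intro tendsto_intros lim)
  ultimately have "\<bar>w s t\<bar> \<le> \<epsilon> * exp (\<bar>C\<bar> * (b - a) * (d - c)) + B * 0"
    by (intro LIMSEQ_le_const[of "\<lambda>m. \<epsilon> * exp (\<bar>C\<bar> * (b - a) * (d - c)) + B * mu a c C m s t"]) auto
  then show ?thesis by simp
qed

definition trm :: "(nat \<Rightarrow> real) \<Rightarrow> real \<Rightarrow> real \<Rightarrow> real \<Rightarrow> nat \<Rightarrow> nat \<Rightarrow> real \<Rightarrow> real \<Rightarrow> real" where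
  "trm \<alpha> C a c n m s t = \<alpha> n * (C * (t - c)) ^ m * (s - a) ^ (n + m) / fact m * fact n / fact (n + m)"

definition U :: "(nat \<Rightarrow> real) \<Rightarrow> real \<Rightarrow> real \<Rightarrow> real \<Rightarrow> nat set \<Rightarrow> nat \<Rightarrow> real \<Rightarrow> real \<Rightarrow> real" where
  "U \<alpha> C a c S M s t = (\<Sum>n\<in>S. \<Sum>m<M. trm \<alpha> C a c n m s t)"

lemma trm_alt1: "trm \<alpha> C a c n m r w = (\<alpha> n * C ^ m / fact m * fact n / fact (n + m)) * (r - a) ^ (n + m) * (w - c) ^ m"
  unfolding trm_def by (simp add: power_mult_distrib)

lemma trm_alt2: "trm \<alpha> C c a n m w r = (\<alpha> n * C ^ m / fact m * fact n / fact (n + m)) * (r - a) ^ m * (w - c) ^ (n + m)"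
  unfolding trm_def by (simp add: power_mult_distrib)

lemma alg1:
  fixes X Y C \<alpha> :: real
  shows "C * (\<alpha> * C ^ m / fact m * fact n / fact (n + m) * X ^ Suc (n + m) * Y ^ Suc m / (real (Suc (n + m)) * real (Suc m)))
    = \<alpha> * (C * Y) ^ Suc m * X ^ (n + Suc m) / fact (Suc m) * fact n / fact (n + Suc m)"
proof -
  have e: "n + Suc m = Suc (n + m)" by simp
  show ?thesis unfolding e fact_Suc power_mult_distrib
    by (simp add: field_simps del: of_nat_Suc)
qed

lemma alg2:
  fixes X Y C \<alpha> :: real
  shows "C * (\<alpha> * C ^ m / fact m * fact n / fact (n + m) * X ^ Suc m * Y ^ Suc (n + m) / (real (Suc m) * real (Suc (n + m))))
    = \<alpha> * (C * X) ^ Suc m * Y ^ (n + Suc m) / fact (Suc m) * fact n / fact (n + Suc m)"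
proof -
  have e: "n + Suc m = Suc (n + m)" by simp
  show ?thesis unfolding e fact_Suc power_mult_distrib
    by (simp add: field_simps del: of_nat_Suc)
qed

lemma trm_Iop1:
  fixes a c s t :: real assumes "a \<le> s" "c \<le> t"
  shows "C * Iop a c (\<lambda>r w. trm \<alpha> C a c n m r w) s t = trm \<alpha> C a c n (Suc m) s t"
proof -
  have "Iop a c (\<lambda>r w. trm \<alpha> C a c n m r w) s t =
     (\<alpha> n * C ^ m / fact m * fact n / fact (n + m)) * (s - a) ^ Suc (n + m) * (t - c) ^ Suc m / (real (Suc (n + m)) * real (Suc m))"
    unfolding trm_alt1 by (rule Iop_monomial[OF assms])
  note h = this
  show ?thesis unfolding h trm_def[of _ _ _ _ _ "Suc m"]
    by (rule alg1)
qed

lemma trm_Iop2: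
  fixes a c s t :: real assumes "a \<le> s" "c \<le> t"
  shows "C * Iop a c (\<lambda>r w. trm \<alpha> C c a n m w r) s t = trm \<alpha> C c a n (Suc m) t s"
proof -
  have "Iop a c (\<lambda>r w. trm \<alpha> C c a n m w r) s t =
     (\<alpha> n * C ^ m / fact m * fact n / fact (n + m)) * (s - a) ^ Suc m * (t - c) ^ Suc (n + m) / (real (Suc m) * real (Suc (n + m)))"
    unfolding trm_alt2 by (rule Iop_monomial[OF assms])
  note h = this
  show ?thesis unfolding h trm_def[of _ _ _ _ _ "Suc m"]
    by (rule alg2)
qed

lemma trm_cont1: "continuous_on X (\<lambda>(r, w). trm \<alpha> C a c n m r w)"
  unfolding trm_def case_prod_beta by (intro continuous_intros) auto

lemma trm_cont2: "continuous_on X (\<lambda>(r, w). trm \<alpha> C c a n m w r)"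
  unfolding trm_def case_prod_beta by (intro continuous_intros) auto

lemma U_cont1: "continuous_on X (\<lambda>(r, w). U \<alpha> C a c S M r w)"
  unfolding U_def trm_def case_prod_beta by (intro continuous_intros) auto

lemma U_cont2: "continuous_on X (\<lambda>(r, w). U \<alpha> C c a S M w r)"
  unfolding U_def trm_def case_prod_beta by (intro continuous_intros) auto

lemma trm0: "trm \<alpha> C a c n 0 s t = \<alpha> n * (s - a) ^ n"
  unfolding trm_def by simp

lemma U_Suc1:
  fixes a c s t :: real assumes "a \<le> s" "c \<le> t" "finite S"
  shows "U \<alpha> C a c S (Suc M) s t = (\<Sum>n\<in>S. \<alpha> n * (s - a) ^ n) + C * Iop a c (U \<alpha> C a c S M) s t"
proof -
  have "Iop a c (U \<alpha> C a c S M) s t = (\<Sum>n\<in>S. Iop a c (\<lambda>r w. \<Sum>m<M. trm \<alpha> C a c n m r w) s t)"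
    unfolding U_def
    by (rule Iop_sum[where b=s and d=t]) (use assms in \<open>auto simp: trm_def case_prod_beta intro!: continuous_intros\<close>)
  also have "\<dots> = (\<Sum>n\<in>S. \<Sum>m<M. Iop a c (\<lambda>r w. trm \<alpha> C a c n m r w) s t)"
    by (intro sum.cong refl Iop_sum[where b=s and d=t]) (use assms trm_cont1 in auto)
  finally have "C * Iop a c (U \<alpha> C a c S M) s t = (\<Sum>n\<in>S. \<Sum>m<M. trm \<alpha> C a c n (Suc m) s t)"
    by (simp add: sum_distrib_left trm_Iop1[OF assms(1,2)])
  then show ?thesis
    by (simp only: U_def sum.lessThan_Suc_shift sum.distrib trm0)
qed

lemma U_Suc2:
  fixes a c s t :: real assumes "a \<le> s" "c \<le> t" "finite S"
  shows "U \<alpha> C c a S (Suc M) t s = (\<Sum>n\<in>S. \<alpha> n * (t - c) ^ n) + C * Iop a c (\<lambda>r w. U \<alpha> C c a S M w r) s t"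
proof -
  have "Iop a c (\<lambda>r w. U \<alpha> C c a S M w r) s t = (\<Sum>n\<in>S. Iop a c (\<lambda>r w. \<Sum>m<M. trm \<alpha> C c a n m w r) s t)"
    unfolding U_def
    by (rule Iop_sum[where b=s and d=t]) (use assms in \<open>auto simp: trm_def case_prod_beta intro!: continuous_intros\<close>)
  also have "\<dots> = (\<Sum>n\<in>S. \<Sum>m<M. Iop a c (\<lambda>r w. trm \<alpha> C c a n m w r) s t)"
    by (intro sum.cong refl Iop_sum[where b=s and d=t]) (use assms trm_cont2 in auto)
  finally have "C * Iop a c (\<lambda>r w. U \<alpha> C c a S M w r) s t = (\<Sum>n\<in>S. \<Sum>m<M. trm \<alpha> C c a n (Suc m) t s)"
    by (simp add: sum_distrib_left trm_Iop2[OF assms(1,2)])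
  then show ?thesis
    by (simp only: U_def sum.lessThan_Suc_shift sum.distrib trm0)
qed

lemma trm_bound:
  fixes a c s t :: real assumes "a \<le> s" "c \<le> t"
  shows "\<bar>trm \<alpha> C a c n m s t\<bar> \<le> \<bar>\<alpha> n\<bar> * (s - a) ^ n * (\<bar>C\<bar> * (t - c) * (s - a)) ^ m / fact m"
proof -
  have f: "fact n / fact (n + m) \<le> (1::real)" "0 \<le> fact n / (fact (n + m) :: real)"
    by (auto simp: fact_mono)
  have "\<bar>trm \<alpha> C a c n m s t\<bar> = \<bar>\<alpha> n\<bar> * \<bar>C * (t - c)\<bar> ^ m * \<bar>s - a\<bar> ^ (n + m) / fact m * (fact n / fact (n + m))"
    unfolding trm_def by (simp add: abs_mult power_abs)
  also have "\<bar>C * (t - c)\<bar> = \<bar>C\<bar> * (t - c)" using assms by (simp add: abs_mult)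
  also have "\<bar>s - a\<bar> = s - a" using assms by simp
  also have "\<bar>\<alpha> n\<bar> * (\<bar>C\<bar> * (t - c)) ^ m * (s - a) ^ (n + m) / fact m = \<bar>\<alpha> n\<bar> * (s - a) ^ n * (\<bar>C\<bar> * (t - c) * (s - a)) ^ m / fact m"
    by (simp add: power_add power_mult_distrib mult_ac)
  also have "\<bar>\<alpha> n\<bar> * (s - a) ^ n * (\<bar>C\<bar> * (t - c) * (s - a)) ^ m / fact m * (fact n / fact (n + m)) \<le> \<bar>\<alpha> n\<bar> * (s - a) ^ n * (\<bar>C\<bar> * (t - c) * (s - a)) ^ m / fact m"
    using f assms by (intro mult_left_le) auto
  finally show ?thesis .
qed

lemma exp_term_summable: "summable (\<lambda>m. (L::real) ^ m / fact m)"
  using summable_exp_generic[of L] by (simp add: divide_inverse mult.commute)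

lemma trm_summable:
  fixes a c s t :: real assumes "a \<le> s" "c \<le> t"
  shows "summable (\<lambda>m. trm \<alpha> C a c n m s t)"
proof (rule summable_comparison_test'[where N=0])
  show "summable (\<lambda>m. \<bar>\<alpha> n\<bar> * (s - a) ^ n * ((\<bar>C\<bar> * (t - c) * (s - a)) ^ m / fact m))"
    by (intro summable_mult exp_term_summable)
  fix m show "norm (trm \<alpha> C a c n m s t) \<le> \<bar>\<alpha> n\<bar> * (s - a) ^ n * ((\<bar>C\<bar> * (t - c) * (s - a)) ^ m / fact m)"
    using trm_bound[OF assms, of \<alpha> C n m] by simp
qed

lemma U_lim:
  fixes a c s t :: real assumes "a \<le> s" "c \<le> t"
  shows "(\<lambda>M. U \<alpha> C a c S M s t) \<longlonglongrightarrow> (\<Sum>n\<in>S. \<Sum>m. trm \<alpha> C a c n m s t)"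
  unfolding U_def by (intro tendsto_sum summable_LIMSEQ trm_summable assms)

lemma top_bound:
  fixes a b c d r w :: real assumes "r \<in> {a..b}" "w \<in> {c..d}"
  shows "\<bar>\<Sum>n\<in>S. trm \<alpha> C a c n M r w\<bar> \<le> (\<Sum>n\<in>S. \<bar>\<alpha> n\<bar> * (b - a) ^ n) * ((\<bar>C\<bar> * (d - c) * (b - a)) ^ M / fact M)"
proof -
  have "\<bar>\<Sum>n\<in>S. trm \<alpha> C a c n M r w\<bar> \<le> (\<Sum>n\<in>S. \<bar>trm \<alpha> C a c n M r w\<bar>)" by (rule sum_abs)
  also have "\<dots> \<le> (\<Sum>n\<in>S. \<bar>\<alpha> n\<bar> * (b - a) ^ n * ((\<bar>C\<bar> * (d - c) * (b - a)) ^ M / fact M))"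
  proof (rule sum_mono)
    fix n
    have "\<bar>trm \<alpha> C a c n M r w\<bar> \<le> \<bar>\<alpha> n\<bar> * (r - a) ^ n * ((\<bar>C\<bar> * (w - c) * (r - a)) ^ M / fact M)"
      using trm_bound[of a r c w \<alpha> C n M] assms by simp
    also have "\<dots> \<le> \<bar>\<alpha> n\<bar> * (b - a) ^ n * ((\<bar>C\<bar> * (d - c) * (b - a)) ^ M / fact M)"
      using assms
      by (intro mult_mono mult_left_mono power_mono divide_right_mono mult_nonneg_nonneg) auto
    finally show "\<bar>trm \<alpha> C a c n M r w\<bar> \<le> \<bar>\<alpha> n\<bar> * (b - a) ^ n * ((\<bar>C\<bar> * (d - c) * (b - a)) ^ M / fact M)" .
  qed
  also have "\<dots> = (\<Sum>n\<in>S. \<bar>\<alpha> n\<bar> * (b - a) ^ n) * ((\<bar>C\<bar> * (d - c) * (b - a)) ^ M / fact M)"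
    by (rule sum_distrib_right[symmetric])
  finally show ?thesis .
qed

lemma exp_term_lim: "(\<lambda>M. (L::real) ^ M / fact M) \<longlonglongrightarrow> 0"
  by (rule summable_LIMSEQ_zero[OF exp_term_summable])

lemma U_diff_Suc: "U \<alpha> C a c S (Suc M) s t - U \<alpha> C a c S M s t = (\<Sum>n\<in>S. trm \<alpha> C a c n M s t)"
  unfolding U_def by (simp add: sum.distrib)

lemma cauchy_bound:
  fixes a b c d s t \<epsilon> :: real
  assumes ab: "a \<le> b" and cd: "c \<le> d" and st: "s \<in> {a..b}" "t \<in> {c..d}" and S: "finite S"
    and bnd: "\<And>x. x \<in> {a..b} \<Longrightarrow> \<bar>\<Sum>n\<in>S. \<alpha> n * (x - a) ^ n\<bar> \<le> \<epsilon>"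
  shows "\<bar>\<Sum>n\<in>S. \<Sum>m. trm \<alpha> C a c n m s t\<bar> \<le> \<epsilon> * exp (\<bar>C\<bar> * (b - a) * (d - c))"
proof -
  define K where "K = (\<Sum>n\<in>S. \<bar>\<alpha> n\<bar> * (b - a) ^ n)"
  define D where "D = \<bar>C\<bar> * (d - c) * (b - a)"
  define E where "E = exp (\<bar>C\<bar> * (b - a) * (d - c))"
  have each: "\<bar>U \<alpha> C a c S M s t\<bar> \<le> (\<epsilon> + K * (D ^ M / fact M)) * E" for M
    unfolding E_def
  proof (rule stab[OF ab cd U_cont1 _ st])
    fix r v assume r: "r \<in> {a..b}" and v: "v \<in> {c..d}"
    have "C * Iop a c (U \<alpha> C a c S M) r v = U \<alpha> C a c S (Suc M) r v - (\<Sum>n\<in>S. \<alpha> n * (r - a) ^ n)"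
      using U_Suc1[of a r c v S \<alpha> C M] r v S by simp
    then have "U \<alpha> C a c S M r v - C * Iop a c (U \<alpha> C a c S M) r v
        = (\<Sum>n\<in>S. \<alpha> n * (r - a) ^ n) - (\<Sum>n\<in>S. trm \<alpha> C a c n M r v)"
      using U_diff_Suc[of \<alpha> C a c S M r v] by simp
    moreover have "\<bar>\<Sum>n\<in>S. trm \<alpha> C a c n M r v\<bar> \<le> K * (D ^ M / fact M)"
      unfolding K_def D_def by (rule top_bound[OF r v])
    moreover have "\<bar>\<Sum>n\<in>S. \<alpha> n * (r - a) ^ n\<bar> \<le> \<epsilon>" using bnd r by blast
    ultimately show "\<bar>U \<alpha> C a c S M r v - C * Iop a c (U \<alpha> C a c S M) r v\<bar> \<le> \<epsilon> + K * (D ^ M / fact M)"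
      by linarith
  qed
  have l1: "(\<lambda>M. \<bar>U \<alpha> C a c S M s t\<bar>) \<longlonglongrightarrow> \<bar>\<Sum>n\<in>S. \<Sum>m. trm \<alpha> C a c n m s t\<bar>"
    using st by (intro tendsto_intros U_lim) auto
  have l2: "(\<lambda>M. (\<epsilon> + K * (D ^ M / fact M)) * E) \<longlonglongrightarrow> (\<epsilon> + K * 0) * E"
    by (intro tendsto_intros exp_term_lim)
  have "\<bar>\<Sum>n\<in>S. \<Sum>m. trm \<alpha> C a c n m s t\<bar> \<le> (\<epsilon> + K * 0) * E"
    by (rule LIMSEQ_le[OF l1 l2]) (use each in auto)
  then show ?thesis by (simp add: E_def)
qed

lemma A_summable:
  fixes a b c d s t :: real
  assumes ab: "a \<le> b" and cd: "c \<le> d" and st: "s \<in> {a..b}" "t \<in> {c..d}"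
    and ul: "uniform_limit {a..b} (\<lambda>N x. \<Sum>n<N. \<alpha> n * (x - a) ^ n) \<sigma> sequentially"
  shows "summable (\<lambda>n. \<Sum>m. trm \<alpha> C a c n m s t)"
  unfolding summable_Cauchy
proof (intro allI impI)
  fix e :: real assume e: "e > 0"
  define E where "E = exp (\<bar>C\<bar> * (b - a) * (d - c))"
  have E0: "E > 0" by (simp add: E_def)
  have e3: "e / (3 * E) > 0" using e E0 by simp
  obtain N where N0: "\<forall>n\<ge>N. \<forall>x\<in>{a..b}. dist (\<Sum>k<n. \<alpha> k * (x - a) ^ k) (\<sigma> x) < e / (3 * E)"
    using ul[unfolded uniform_limit_sequentially_iff, rule_format, OF e3] by blast
  have N: "\<And>n x. n \<ge> N \<Longrightarrow> x \<in> {a..b} \<Longrightarrow> dist (\<Sum>k<n. \<alpha> k * (x - a) ^ k) (\<sigma> x) < e / (3 * E)"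
    using N0 by blast
  show "\<exists>N. \<forall>m\<ge>N. \<forall>n. norm (\<Sum>k = m..<n. \<Sum>m. trm \<alpha> C a c k m s t) < e"
  proof (intro exI allI impI)
    fix m n assume m: "N \<le> m"
    show "norm (\<Sum>k = m..<n. \<Sum>m. trm \<alpha> C a c k m s t) < e"
    proof (cases "m \<le> n")
      case False then show ?thesis using e by simp
    next
      case True
      have "\<bar>\<Sum>k = m..<n. \<Sum>m. trm \<alpha> C a c k m s t\<bar> \<le> (2 * (e / (3 * E))) * E"
      proof (rule cauchy_bound[OF ab cd st finite_atLeastLessThan, where C=C, folded E_def])
        fix x assume x: "x \<in> {a..b}"
        have "(\<Sum>k = m..<n. \<alpha> k * (x - a) ^ k) = (\<Sum>k<n. \<alpha> k * (x - a) ^ k) - (\<Sum>k<m. \<alpha> k * (x - a) ^ k)"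
          using sum_diff_nat_ivl[of 0 m n "\<lambda>k. \<alpha> k * (x - a) ^ k"] True by (simp add: atLeast0LessThan)
        moreover have "dist (\<Sum>k<n. \<alpha> k * (x - a) ^ k) (\<sigma> x) < e / (3 * E)" using N[of n x] m True x by simp
        moreover have "dist (\<Sum>k<m. \<alpha> k * (x - a) ^ k) (\<sigma> x) < e / (3 * E)" using N[of m x] m x by simp
        ultimately show "\<bar>\<Sum>k = m..<n. \<alpha> k * (x - a) ^ k\<bar> \<le> 2 * (e / (3 * E))"
          by (simp add: dist_real_def)
      qed
      also have "\<dots> < e" using e E0 by (simp add: field_simps)
      finally show ?thesis by simp
    qed
  qed
qed

lemma sum_split0: "1 \<le> (N::nat) \<Longrightarrow> (\<Sum>n<N. f n) = f 0 + (\<Sum>n\<in>{1..<N}. f n)"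
proof -
  assume "1 \<le> N" then have "0 < N" by simp
  then have "sum f {0..<N} = f 0 + sum f {Suc 0..<N}" by (rule sum.atLeast_Suc_lessThan)
  then show ?thesis by (simp add: atLeast0LessThan)
qed

lemma main_bound:
  fixes a b c d s t C \<eta> :: real and p q :: "nat \<Rightarrow> real" and \<sigma> \<tau> :: "real \<Rightarrow> real"
    and k :: "real \<Rightarrow> real \<Rightarrow> real"
  assumes ab: "a \<le> b" and cd: "c \<le> d"
    and g: "goursat_solution a b c d C \<sigma> \<tau> k"
    and \<sigma>a: "\<sigma> a = p 0" and N: "1 \<le> N"
    and b1: "\<And>x. x \<in> {a..b} \<Longrightarrow> \<bar>\<sigma> x - (\<Sum>n<N. p n * (x - a) ^ n)\<bar> \<le> \<eta>"
    and b2: "\<And>y. y \<in> {c..d} \<Longrightarrow> \<bar>\<tau> y - (\<Sum>n<N. q n * (y - c) ^ n)\<bar> \<le> \<eta>"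
    and st: "s \<in> {a..b}" "t \<in> {c..d}"
  shows "\<bar>k s t - (\<Sum>n\<in>{1..<N}. \<Sum>m. trm p C a c n m s t) - (\<Sum>n<N. \<Sum>m. trm q C c a n m t s)\<bar>
     \<le> (2 * \<eta>) * exp (\<bar>C\<bar> * (b - a) * (d - c))"
proof -
  define S1 where "S1 = {1..<N}"
  define S2 where "S2 = {..<N}"
  have fin: "finite S1" "finite S2" by (auto simp: S1_def S2_def)
  have kc: "continuous_on ({a..b} \<times> {c..d}) (\<lambda>(s, t). k s t)"
    and keq: "\<And>s t. s \<in> {a..b} \<Longrightarrow> t \<in> {c..d} \<Longrightarrow> k s t = \<sigma> s + \<tau> t - \<sigma> a + C * Iop a c k s t"
    using g unfolding goursat_solution_def Iop_def by auto
  define K1 where "K1 = (\<Sum>n\<in>S1. \<bar>p n\<bar> * (b - a) ^ n)"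
  define K2 where "K2 = (\<Sum>n\<in>S2. \<bar>q n\<bar> * (d - c) ^ n)"
  define D1 where "D1 = \<bar>C\<bar> * (d - c) * (b - a)"
  define D2 where "D2 = \<bar>C\<bar> * (b - a) * (d - c)"
  define E where "E = exp (\<bar>C\<bar> * (b - a) * (d - c))"
  define W where "W M r v = k r v - U p C a c S1 M r v - U q C c a S2 M v r" for M r v
  have Wc: "continuous_on ({a..b} \<times> {c..d}) (\<lambda>(r, v). W M r v)" for M
  proof -
    have "continuous_on ({a..b} \<times> {c..d}) (\<lambda>x. (\<lambda>(r, v). k r v) x - (\<lambda>(r, v). U p C a c S1 M r v) x - (\<lambda>(r, v). U q C c a S2 M v r) x)"
      by (intro continuous_on_diff kc U_cont1 U_cont2)
    then show ?thesis unfolding W_def by (simp add: case_prod_beta)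
  qed
  have each: "\<bar>W M s t\<bar> \<le> (2 * \<eta> + (K1 * (D1 ^ M / fact M) + K2 * (D2 ^ M / fact M))) * E" for M
    unfolding E_def
  proof (rule stab[OF ab cd Wc _ st])
    fix r v assume r: "r \<in> {a..b}" and v: "v \<in> {c..d}"
    have c1: "continuous_on ({a..b} \<times> {c..d}) (\<lambda>(r, v). k r v - U p C a c S1 M r v)"
    proof -
      have "continuous_on ({a..b} \<times> {c..d}) (\<lambda>x. (\<lambda>(r, v). k r v) x - (\<lambda>(r, v). U p C a c S1 M r v) x)"
        by (intro continuous_on_diff kc U_cont1)
      then show ?thesis by (simp add: case_prod_beta)
    qed
    have IW: "Iop a c (W M) r v = Iop a c k r v - Iop a c (U p C a c S1 M) r v - Iop a c (\<lambda>r v. U q C c a S2 M v r) r v"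
    proof -
      have "Iop a c (W M) r v = Iop a c (\<lambda>r v. k r v - U p C a c S1 M r v) r v - Iop a c (\<lambda>r v. U q C c a S2 M v r) r v"
        unfolding W_def[abs_def] by (rule Iop_diff[OF c1 U_cont2]) (use r v in auto)
      also have "Iop a c (\<lambda>r v. k r v - U p C a c S1 M r v) r v = Iop a c k r v - Iop a c (U p C a c S1 M) r v"
        by (rule Iop_diff[OF kc U_cont1]) (use r v in auto)
      finally show ?thesis .
    qed
    have U1: "C * Iop a c (U p C a c S1 M) r v = U p C a c S1 (Suc M) r v - (\<Sum>n\<in>S1. p n * (r - a) ^ n)"
      using U_Suc1[of a r c v S1 p C M] r v fin by simp
    have U2: "C * Iop a c (\<lambda>r v. U q C c a S2 M v r) r v = U q C c a S2 (Suc M) v r - (\<Sum>n\<in>S2. q n * (v - c) ^ n)"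
      using U_Suc2[of a r c v S2 q C M] r v fin by simp
    have d1: "U p C a c S1 (Suc M) r v - U p C a c S1 M r v = (\<Sum>n\<in>S1. trm p C a c n M r v)"
      by (rule U_diff_Suc)
    have d2: "U q C c a S2 (Suc M) v r - U q C c a S2 M v r = (\<Sum>n\<in>S2. trm q C c a n M v r)"
      by (rule U_diff_Suc)
    have t1: "\<bar>\<Sum>n\<in>S1. trm p C a c n M r v\<bar> \<le> K1 * (D1 ^ M / fact M)"
      unfolding K1_def D1_def by (rule top_bound[OF r v])
    have t2: "\<bar>\<Sum>n\<in>S2. trm q C c a n M v r\<bar> \<le> K2 * (D2 ^ M / fact M)"
      unfolding K2_def D2_def by (rule top_bound[OF v r])
    have sp: "(\<Sum>n<N. p n * (r - a) ^ n) = p 0 + (\<Sum>n\<in>S1. p n * (r - a) ^ n)"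
      unfolding S1_def using sum_split0[OF N, of "\<lambda>n. p n * (r - a) ^ n"] by simp
    have e1: "\<bar>\<sigma> r - (\<Sum>n<N. p n * (r - a) ^ n)\<bar> \<le> \<eta>" using b1 r by blast
    have e2: "\<bar>\<tau> v - (\<Sum>n\<in>S2. q n * (v - c) ^ n)\<bar> \<le> \<eta>" using b2 v by (simp add: S2_def)
    have "W M r v - C * Iop a c (W M) r v =
       (\<sigma> r - (\<Sum>n<N. p n * (r - a) ^ n)) + (\<tau> v - (\<Sum>n\<in>S2. q n * (v - c) ^ n))
       + (\<Sum>n\<in>S1. trm p C a c n M r v) + (\<Sum>n\<in>S2. trm q C c a n M v r)"
      using keq[OF r v] U1 U2 d1 d2 sp \<sigma>a unfolding IW W_def by (simp add: algebra_simps)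
    then show "\<bar>W M r v - C * Iop a c (W M) r v\<bar> \<le> 2 * \<eta> + (K1 * (D1 ^ M / fact M) + K2 * (D2 ^ M / fact M))"
      using e1 e2 t1 t2 by linarith
  qed
  have l1: "(\<lambda>M. \<bar>W M s t\<bar>) \<longlonglongrightarrow> \<bar>k s t - (\<Sum>n\<in>S1. \<Sum>m. trm p C a c n m s t) - (\<Sum>n\<in>S2. \<Sum>m. trm q C c a n m t s)\<bar>"
    unfolding W_def using st by (intro tendsto_intros U_lim) auto
  have l2: "(\<lambda>M. (2 * \<eta> + (K1 * (D1 ^ M / fact M) + K2 * (D2 ^ M / fact M))) * E) \<longlonglongrightarrow> (2 * \<eta> + (K1 * 0 + K2 * 0)) * E"
    by (intro tendsto_intros exp_term_lim)
  have "\<bar>k s t - (\<Sum>n\<in>S1. \<Sum>m. trm p C a c n m s t) - (\<Sum>n\<in>S2. \<Sum>m. trm q C c a n m t s)\<bar> \<le> (2 * \<eta> + (K1 * 0 + K2 * 0)) * E"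
    by (rule LIMSEQ_le[OF l1 l2]) (use each in auto)
  then show ?thesis by (simp add: E_def S1_def S2_def)
qed

theorem mainTheorem6:
  fixes a b c d C :: real and p q :: "nat \<Rightarrow> real"
    and \<sigma> \<tau> :: "real \<Rightarrow> real" and k :: "real \<Rightarrow> real \<Rightarrow> real"
  assumes "a < b" and "c < d" and "C \<noteq> 0"
    and "p 0 = q 0"
    and "uniform_limit {a..b} (\<lambda>N s. \<Sum>n<N. p n * (s - a) ^ n) \<sigma> sequentially"
    and "uniform_limit {c..d} (\<lambda>N t. \<Sum>n<N. q n * (t - c) ^ n) \<tau> sequentially"
    and "goursat_solution a b c d C \<sigma> \<tau> k"
    and "s \<in> {a..b}" and "t \<in> {c..d}"
  shows "(k s t =
           (\<Sum>n. \<Sum>m. p (Suc n) * (C * (t - c)) ^ m * (s - a) ^ (Suc n + m) / fact m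
                        * fact (Suc n) / fact (Suc n + m))
         + (\<Sum>n. \<Sum>m. q n * (C * (s - a)) ^ m * (t - c) ^ (n + m) / fact m
                        * fact n / fact (n + m))) \<and>
         (k s t =
           (\<Sum>n. \<Sum>m. p n * (C * (t - c)) ^ m * (s - a) ^ (n + m) / fact m
                        * fact n / fact (n + m))
         + (\<Sum>n. \<Sum>m. q (Suc n) * (C * (s - a)) ^ m * (t - c) ^ (Suc n + m) / fact m
                        * fact (Suc n) / fact (Suc n + m)))"
proof -
  have ab: "a \<le> b" and cd: "c \<le> d" using assms(1,2) by auto
  note st = assms(8,9)
  define A where "A n = (\<Sum>m. trm p C a c n m s t)" for n
  define B where "B n = (\<Sum>m. trm q C c a n m t s)" for n
  have sA: "summable A" unfolding A_def
    by (rule A_summable[OF ab cd st assms(5)])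
  have sB: "summable B" unfolding B_def
    by (rule A_summable[OF cd ab st(2) st(1) assms(6)])
  have \<sigma>a: "\<sigma> a = p 0"
  proof -
    have l: "(\<lambda>N. \<Sum>n<N. p n * (a - a) ^ n) \<longlonglongrightarrow> \<sigma> a"
      using tendsto_uniform_limitI[OF assms(5), of a] ab by simp
    have "(\<lambda>N. \<Sum>n<Suc N. p n * (a - a) ^ n) \<longlonglongrightarrow> \<sigma> a"
      using LIMSEQ_Suc[OF l] by simp
    moreover have "(\<Sum>n<Suc N. p n * (a - a) ^ n) = p 0" for N
      using sum_split0[of "Suc N" "\<lambda>n. p n * (a - a) ^ n"] by simp
    ultimately have "(\<lambda>N. p 0) \<longlonglongrightarrow> \<sigma> a" by simp
    then show ?thesis using LIMSEQ_unique tendsto_const by blast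
  qed
  define E where "E = exp (\<bar>C\<bar> * (b - a) * (d - c))"
  have E0: "E > 0" by (simp add: E_def)
  have lim1: "(\<lambda>N. (\<Sum>n<N. A n) - A 0 + (\<Sum>n<N. B n)) \<longlonglongrightarrow> k s t"
  proof (rule LIMSEQ_I)
    fix r :: real assume r: "0 < r"
    define \<eta> where "\<eta> = r / (3 * E)"
    have \<eta>0: "\<eta> > 0" using r E0 by (simp add: \<eta>_def)
    obtain N1 where N1: "\<forall>n\<ge>N1. \<forall>x\<in>{a..b}. dist (\<Sum>k<n. p k * (x - a) ^ k) (\<sigma> x) < \<eta>"
      using assms(5)[unfolded uniform_limit_sequentially_iff, rule_format, OF \<eta>0] by blast
    obtain N2 where N2: "\<forall>n\<ge>N2. \<forall>x\<in>{c..d}. dist (\<Sum>k<n. q k * (x - c) ^ k) (\<tau> x) < \<eta>"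
      using assms(6)[unfolded uniform_limit_sequentially_iff, rule_format, OF \<eta>0] by blast
    show "\<exists>no. \<forall>n\<ge>no. norm ((\<Sum>n<n. A n) - A 0 + (\<Sum>n<n. B n) - k s t) < r"
    proof (intro exI allI impI)
      fix n assume n: "max (max N1 N2) 1 \<le> n"
      have "\<bar>k s t - (\<Sum>n\<in>{1..<n}. \<Sum>m. trm p C a c n m s t) - (\<Sum>n<n. \<Sum>m. trm q C c a n m t s)\<bar>
          \<le> (2 * \<eta>) * E"
        unfolding E_def
      proof (rule main_bound[where N=n and \<eta>=\<eta> and a=a and b=b and c=c and d=d and C=C and \<sigma>=\<sigma> and \<tau>=\<tau> and k=k and p=p and q=q and s=s and t=t, OF ab cd assms(7) \<sigma>a])
        show "1 \<le> n" using n by simp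
      next
        fix x assume "x \<in> {a..b}"
        then show "\<bar>\<sigma> x - (\<Sum>n<n. p n * (x - a) ^ n)\<bar> \<le> \<eta>"
          using N1 n by (force simp: dist_real_def abs_minus_commute)
      next
        fix y assume "y \<in> {c..d}"
        then show "\<bar>\<tau> y - (\<Sum>n<n. q n * (y - c) ^ n)\<bar> \<le> \<eta>"
          using N2 n by (force simp: dist_real_def abs_minus_commute)
      qed (use st in auto)
      moreover have "(\<Sum>n<n. A n) - A 0 = (\<Sum>n\<in>{1..<n}. A n)"
        using sum_split0[of n A] n by simp
      moreover have "2 * \<eta> * E < r" using E0 r by (simp add: \<eta>_def field_simps)
      ultimately show "norm ((\<Sum>n<n. A n) - A 0 + (\<Sum>n<n. B n) - k s t) < r"
        unfolding A_def B_def by (simp add: abs_minus_commute)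
    qed
  qed
  have lim2: "(\<lambda>N. (\<Sum>n<N. A n) - A 0 + (\<Sum>n<N. B n)) \<longlonglongrightarrow> suminf A - A 0 + suminf B"
    by (intro tendsto_intros summable_LIMSEQ sA sB)
  have keq: "k s t = suminf A - A 0 + suminf B"
    using LIMSEQ_unique[OF lim1 lim2] .
  have AB0: "A 0 = B 0"
    unfolding A_def B_def trm_def by (simp add: power_mult_distrib assms(4) mult_ac)
  have f1: "k s t = (\<Sum>n. A (Suc n)) + (\<Sum>n. B n)"
    using keq suminf_split_head[OF sA] by simp
  have f2: "k s t = (\<Sum>n. A n) + (\<Sum>n. B (Suc n))"
    using keq suminf_split_head[OF sB] AB0 by simp
  show ?thesis using f1 f2 unfolding A_def B_def trm_def by blast
qed

end
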